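(* Let $f:\Gamma\to\Gamma$ be an irreducible, expanding graph map which is a homotopy equivalence. Then each stack $\mathcal{K}$ of $f$ has the form $\mathcal{K}=\{e,f(e),f^2(e),\dots,f^s(e)\}$ (as unoriented edges) for some edge $e$ and some $s\ge0$, where $e,f(e),\dots,f^{s-1}(e)$ are non-mixing and non-surplus and $f^s(e)$ is either mixing or surplus.
   Context: A graph $\Gamma$ is a finite 1-dimensional CW complex (multiple edges and loops allowed) with a chosen orientation on each edge; $\mathcal{E}\Gamma$ is the set of (positively oriented) edges, $\mathcal{E}^\pm\Gamma$ includes both orientations, $\bar e$ is the reverse of $e$, $\iota,\tau$ the endpoint maps. An edge path is a nonempty concatenation $u=e_1\cdots e_k$ with $\tau(e_i)=\iota(e_{i+1})$; $|u|=k$ (no cancellation); $u$ traverses $e$ if $e$ or $\bar e$ occurs in it. A graph map $f:\Gamma\to\Gamma$ consists of a vertex map $f_V$ and an edge path $f(e)$ for each $e\in\mathcal{E}^\pm\Gamma$ with $\iota(f(e))=f_V(\iota(e))$, $f(\bar e)=\overline{f(e)}$; powers are compositions; $f$ is regarded as a continuous map. The transition matrix $T(f)$ has $(i,j)$ entry the number of times $f(e_i)$ traverses $e_j$; $f$ is irreducible if $T(f)$ is an irreducible matrix and every vertex has valence at least $3$; $f$ is expanding if $|f^n(e)|\to\infty$ for every edge $e$. An edge $e\in\mathcal{E}\Gamma$ is mixing if $|f(e)|>1$. It is surplus if it is non-mixing and $f(e)\in\{f(u),\overline{f(u)}\}$ for some edge $u\in\mathcal{E}\Gamma$ with $u\notin\{e,\bar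 e\}$. For a non-mixing edge $e$, $f(e)$ is a single oriented edge, identified with its underlying unoriented edge. The stacks of $f$ are the equivalence classes of the equivalence relation on $\mathcal{E}\Gamma$ generated by $e\sim f(e)$ whenever $e$ is non-mixing and non-surplus. *)

theory Defs
  imports "HOL-Analysis.Analysis"
begin

text \<open>An oriented edge is a pair (e, b): (e, True) is e, (e, False) is its reverse.\<close>

definition graph :: "'v set \<Rightarrow> 'e set \<Rightarrow> ('e \<Rightarrow> 'v) \<Rightarrow> ('e \<Rightarrow> 'v) \<Rightarrow> bool" where
  "graph V E src tgt \<longleftrightarrow> finite V \<and> finite E \<and> (\<forall>e\<in>E. src e \<in> V \<and> tgt e \<in> V)"

type_synonym 'e oedge = "'e \<times> bool"

definition oedges :: "'e set \<Rightarrow> 'e oedge set" where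
  "oedges E = E \<times> UNIV"

fun orev :: "'e oedge \<Rightarrow> 'e oedge" where
  "orev (e, b) = (e, \<not> b)"

fun osrc :: "('e \<Rightarrow> 'v) \<Rightarrow> ('e \<Rightarrow> 'v) \<Rightarrow> 'e oedge \<Rightarrow> 'v" where
  "osrc src tgt (e, b) = (if b then src e else tgt e)"

fun otgt :: "('e \<Rightarrow> 'v) \<Rightarrow> ('e \<Rightarrow> 'v) \<Rightarrow> 'e oedge \<Rightarrow> 'v" where
  "otgt src tgt (e, b) = (if b then tgt e else src e)"

definition rev_path :: "'e oedge list \<Rightarrow> 'e oedge list" where
  "rev_path p = rev (map orev p)"

text \<open>Edge paths: nonempty, consecutive oriented edges of the graph (no cancellation).\<close>
definition edge_path :: "'e set \<Rightarrow> ('e \<Rightarrow> 'v) \<Rightarrow> ('e \<Rightarrow> 'v) \<Rightarrow> 'e oedge list \<Rightarrow> bool" where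
  "edge_path E src tgt p \<longleftrightarrow> p \<noteq> [] \<and> set p \<subseteq> oedges E \<and>
     (\<forall>i. Suc i < length p \<longrightarrow> otgt src tgt (p ! i) = osrc src tgt (p ! Suc i))"

text \<open>Valence of a vertex: number of oriented edges starting at it (loops count twice).\<close>
definition valence :: "'e set \<Rightarrow> ('e \<Rightarrow> 'v) \<Rightarrow> ('e \<Rightarrow> 'v) \<Rightarrow> 'v \<Rightarrow> nat" where
  "valence E src tgt v = card {oe \<in> oedges E. osrc src tgt oe = v}"

text \<open>A graph map is given by a vertex map fV and the edge path fE e for each positively
  oriented edge e; on reversed edges it is defined by f(ebar) = reverse of f(e).\<close>

fun oimg :: "('e \<Rightarrow> 'e oedge list) \<Rightarrow> 'e oedge \<Rightarrow> 'e oedge list" where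
  "oimg fE (e, b) = (if b then fE e else rev_path (fE e))"

definition graph_map ::
  "'v set \<Rightarrow> 'e set \<Rightarrow> ('e \<Rightarrow> 'v) \<Rightarrow> ('e \<Rightarrow> 'v) \<Rightarrow> ('v \<Rightarrow> 'v) \<Rightarrow> ('e \<Rightarrow> 'e oedge list) \<Rightarrow> bool" where
  "graph_map V E src tgt fV fE \<longleftrightarrow>
     (\<forall>v\<in>V. fV v \<in> V) \<and>
     (\<forall>e\<in>E. edge_path E src tgt (fE e) \<and>
             osrc src tgt (hd (fE e)) = fV (src e) \<and>
             otgt src tgt (last (fE e)) = fV (tgt e))"

text \<open>Image of an edge path under f (concatenation, no cancellation).\<close>
definition map_path :: "('e \<Rightarrow> 'e oedge list) \<Rightarrow> 'e oedge list \<Rightarrow> 'e oedge list" where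
  "map_path fE p = concat (map (oimg fE) p)"

fun fpow :: "('e \<Rightarrow> 'e oedge list) \<Rightarrow> nat \<Rightarrow> 'e \<Rightarrow> 'e oedge list" where
  "fpow fE 0 e = [(e, True)]"
| "fpow fE (Suc n) e = map_path fE (fpow fE n e)"

definition trans_mat :: "('e \<Rightarrow> 'e oedge list) \<Rightarrow> 'e \<Rightarrow> 'e \<Rightarrow> nat" where
  "trans_mat fE e e' = length (filter (\<lambda>oe. fst oe = e') (fE e))"

fun mat_pow :: "'e set \<Rightarrow> ('e \<Rightarrow> 'e \<Rightarrow> nat) \<Rightarrow> nat \<Rightarrow> 'e \<Rightarrow> 'e \<Rightarrow> nat" where
  "mat_pow E A 0 i j = (if i = j then 1 else 0)"
| "mat_pow E A (Suc n) i j = (\<Sum>k\<in>E. mat_pow E A n i k * A k j)"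

definition irreducible_matrix :: "'e set \<Rightarrow> ('e \<Rightarrow> 'e \<Rightarrow> nat) \<Rightarrow> bool" where
  "irreducible_matrix E A \<longleftrightarrow> (\<forall>i\<in>E. \<forall>j\<in>E. \<exists>m>0. mat_pow E A m i j > 0)"

definition irreducible_map ::
  "'v set \<Rightarrow> 'e set \<Rightarrow> ('e \<Rightarrow> 'v) \<Rightarrow> ('e \<Rightarrow> 'v) \<Rightarrow> ('e \<Rightarrow> 'e oedge list) \<Rightarrow> bool" where
  "irreducible_map V E src tgt fE \<longleftrightarrow>
     irreducible_matrix E (trans_mat fE) \<and> (\<forall>v\<in>V. valence E src tgt v \<ge> 3)"

definition expanding :: "'e set \<Rightarrow> ('e \<Rightarrow> 'e oedge list) \<Rightarrow> bool" where
  "expanding E fE \<longleftrightarrow> (\<forall>e\<in>E. filterlim (\<lambda>n. length (fpow fE n e)) at_top sequentially)"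

text \<open>Points of the realization: vertices, and interior points (e, t) with 0 < t < 1.\<close>
datatype ('v, 'e) gpoint = Vtx 'v | Inn 'e real

definition gpoints :: "'v set \<Rightarrow> 'e set \<Rightarrow> ('v, 'e) gpoint set" where
  "gpoints V E = Vtx ` V \<union> {Inn e t | e t. e \<in> E \<and> 0 < t \<and> t < 1}"

text \<open>Characteristic map of the closed 1-cell e, parametrised by [0,1].\<close>
definition cell :: "('e \<Rightarrow> 'v) \<Rightarrow> ('e \<Rightarrow> 'v) \<Rightarrow> 'e \<Rightarrow> real \<Rightarrow> ('v, 'e) gpoint" where
  "cell src tgt e t = (if t \<le> 0 then Vtx (src e) else if t \<ge> 1 then Vtx (tgt e) else Inn e t)"

fun ocell :: "('e \<Rightarrow> 'v) \<Rightarrow> ('e \<Rightarrow> 'v) \<Rightarrow> 'e oedge \<Rightarrow> real \<Rightarrow> ('v, 'e) gpoint" where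
  "ocell src tgt (e, b) t = (if b then cell src tgt e t else cell src tgt e (1 - t))"

text \<open>The CW (weak / quotient) topology: U is open iff it is a set of points whose
  preimage under every characteristic map is open in [0,1].\<close>
definition graph_top :: "'v set \<Rightarrow> 'e set \<Rightarrow> ('e \<Rightarrow> 'v) \<Rightarrow> ('e \<Rightarrow> 'v) \<Rightarrow> ('v, 'e) gpoint topology" where
  "graph_top V E src tgt = topology (\<lambda>U. U \<subseteq> gpoints V E \<and>
     (\<forall>e\<in>E. openin (top_of_set {0..1::real}) {t \<in> {0..1}. cell src tgt e t \<in> U}))"

lemma istopology_graph_top: "istopology (\<lambda>U. U \<subseteq> gpoints V E \<and>
     (\<forall>e\<in>E. openin (top_of_set {0..1::real}) {t \<in> {0..1}. cell src tgt e t \<in> U}))"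
  unfolding istopology_def
proof (rule conjI; intro allI impI)
  fix S T :: "('a,'b) gpoint set"
  assume a: "S \<subseteq> gpoints V E \<and> (\<forall>e\<in>E. openin (top_of_set {0..1::real}) {t \<in> {0..1}. cell src tgt e t \<in> S})"
     and b: "T \<subseteq> gpoints V E \<and> (\<forall>e\<in>E. openin (top_of_set {0..1::real}) {t \<in> {0..1}. cell src tgt e t \<in> T})"
  have "\<And>e. {t \<in> {0..1::real}. cell src tgt e t \<in> S \<inter> T} = {t \<in> {0..1}. cell src tgt e t \<in> S} \<inter> {t \<in> {0..1}. cell src tgt e t \<in> T}" by auto
  then show "S \<inter> T \<subseteq> gpoints V E \<and> (\<forall>e\<in>E. openin (top_of_set {0..1::real}) {t \<in> {0..1}. cell src tgt e t \<in> S \<inter> T})"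
    using a b by auto
next
  fix K :: "('a,'b) gpoint set set"
  assume a: "\<forall>S\<in>K. S \<subseteq> gpoints V E \<and> (\<forall>e\<in>E. openin (top_of_set {0..1::real}) {t \<in> {0..1}. cell src tgt e t \<in> S})"
  have "\<And>e. {t \<in> {0..1::real}. cell src tgt e t \<in> \<Union>K} = (\<Union>S\<in>K. {t \<in> {0..1}. cell src tgt e t \<in> S})" by auto
  then show "\<Union>K \<subseteq> gpoints V E \<and> (\<forall>e\<in>E. openin (top_of_set {0..1::real}) {t \<in> {0..1}. cell src tgt e t \<in> \<Union>K})"
    using a by (auto intro!: openin_Union)
qed

lemma openin_graph_top:
  "openin (graph_top V E src tgt) U \<longleftrightarrow> U \<subseteq> gpoints V E \<and>
     (\<forall>e\<in>E. openin (top_of_set {0..1::real}) {t \<in> {0..1}. cell src tgt e t \<in> U})"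
  unfolding graph_top_def using istopology_graph_top[of V E src tgt]
  by (simp add: topology_inverse')

text \<open>The continuous map determined by a graph map: vertices go to their images, and
  the edge e is mapped linearly (at constant speed) along the edge path f(e).\<close>
fun realize :: "('e \<Rightarrow> 'v) \<Rightarrow> ('e \<Rightarrow> 'v) \<Rightarrow> ('v \<Rightarrow> 'v) \<Rightarrow> ('e \<Rightarrow> 'e oedge list) \<Rightarrow>
    ('v, 'e) gpoint \<Rightarrow> ('v, 'e) gpoint" where
  "realize src tgt fV fE (Vtx v) = Vtx (fV v)"
| "realize src tgt fV fE (Inn e t) =
     (let p = fE e; s = real (length p) * t; i = nat \<lfloor>s\<rfloor>
      in ocell src tgt (p ! i) (s - real i))"

definition homotopy_equivalence_map :: "'a topology \<Rightarrow> ('a \<Rightarrow> 'a) \<Rightarrow> bool" where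
  "homotopy_equivalence_map X F \<longleftrightarrow> continuous_map X X F \<and>
     (\<exists>G. continuous_map X X G \<and>
          homotopic_with (\<lambda>_. True) X X (G \<circ> F) id \<and>
          homotopic_with (\<lambda>_. True) X X (F \<circ> G) id)"

definition mixing :: "('e \<Rightarrow> 'e oedge list) \<Rightarrow> 'e \<Rightarrow> bool" where
  "mixing fE e \<longleftrightarrow> length (fE e) > 1"

definition surplus :: "'e set \<Rightarrow> ('e \<Rightarrow> 'e oedge list) \<Rightarrow> 'e \<Rightarrow> bool" where
  "surplus E fE e \<longleftrightarrow> \<not> mixing fE e \<and>
     (\<exists>u\<in>E. u \<noteq> e \<and> (fE e = fE u \<or> fE e = rev_path (fE u)))"

text \<open>For a non-mixing edge e, f(e) is a single oriented edge; its underlying edge.\<close>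
definition img_edge :: "('e \<Rightarrow> 'e oedge list) \<Rightarrow> 'e \<Rightarrow> 'e" where
  "img_edge fE e = fst (hd (fE e))"

definition stack_gen :: "'e set \<Rightarrow> ('e \<Rightarrow> 'e oedge list) \<Rightarrow> 'e rel" where
  "stack_gen E fE = {(e, img_edge fE e) | e. e \<in> E \<and> \<not> mixing fE e \<and> \<not> surplus E fE e}"

definition stack_rel :: "'e set \<Rightarrow> ('e \<Rightarrow> 'e oedge list) \<Rightarrow> 'e rel" where
  "stack_rel E fE = Id_on E \<union> (stack_gen E fE \<union> (stack_gen E fE)\<inverse>)\<^sup>+"

definition stacks :: "'e set \<Rightarrow> ('e \<Rightarrow> 'e oedge list) \<Rightarrow> 'e set set" where
  "stacks E fE = E // stack_rel E fE"

end

theory Submission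
  imports Defs
begin

lemma len1_single: "length xs = Suc 0 \<Longrightarrow> \<exists>c. xs = [c]"
  by (cases xs) auto

lemma fpow_chain:
  assumes D: "\<And>x. x \<in> Dset \<Longrightarrow> length (fE x) = 1"
  shows "(\<forall>k<n. (img_edge fE ^^ k) y \<in> Dset) \<longrightarrow> (\<exists>b. fpow fE n y = [((img_edge fE ^^ n) y, b)])"
proof (induction n)
  case 0
  then show ?case by auto
next
  case (Suc n)
  show ?case
  proof
    assume h: "\<forall>k<Suc n. (img_edge fE ^^ k) y \<in> Dset"
    then obtain b where b: "fpow fE n y = [((img_edge fE ^^ n) y, b)]" using Suc by auto
    let ?z = "(img_edge fE ^^ n) y"
    have "?z \<in> Dset" using h by auto
    then obtain c where c: "fE ?z = [c]" using D len1_single by force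
    have "fpow fE (Suc n) y = oimg fE (?z, b)" using b by (simp add: map_path_def)
    also have "\<dots> = [(fst c, if b then snd c else \<not> snd c)]"
      using c by (cases c) (auto simp: rev_path_def)
    finally show "\<exists>b. fpow fE (Suc n) y = [((img_edge fE ^^ Suc n) y, b)]"
      using c by (auto simp: img_edge_def)
  qed
qed

theorem lemma3p1:
  fixes V :: "'v set" and E :: "'e set" and src tgt :: "'e \<Rightarrow> 'v"
    and fV :: "'v \<Rightarrow> 'v" and fE :: "'e \<Rightarrow> 'e oedge list"
  assumes "graph V E src tgt"
    and "graph_map V E src tgt fV fE"
    and "irreducible_map V E src tgt fE"
    and "expanding E fE"
    and "homotopy_equivalence_map (graph_top V E src tgt) (realize src tgt fV fE)"
    and "K \<in> stacks E fE"
  shows "\<exists>e\<in>E. \<exists>s::nat.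
           (\<forall>k\<le>s. length (fpow fE k e) = 1) \<and>
           K = {fst (hd (fpow fE k e)) | k. k \<le> s} \<and>
           (\<forall>k<s. \<not> mixing fE (fst (hd (fpow fE k e))) \<and>
                   \<not> surplus E fE (fst (hd (fpow fE k e)))) \<and>
           (mixing fE (fst (hd (fpow fE s e))) \<or> surplus E fE (fst (hd (fpow fE s e))))"
proof -
  define D where "D = {e\<in>E. \<not> mixing fE e \<and> \<not> surplus E fE e}"
  define g where "g = img_edge fE"
  define S where "S = stack_gen E fE \<union> (stack_gen E fE)\<inverse>"
  have fin: "finite E" using assms(1) by (simp add: graph_def)
  have ep: "\<And>e. e \<in> E \<Longrightarrow> edge_path E src tgt (fE e)" using assms(2) by (simp add: graph_map_def)
  have D1: "\<And>x. x \<in> D \<Longrightarrow> length (fE x) = 1"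
  proof -
    fix x assume "x \<in> D"
    then have "x \<in> E" "\<not> length (fE x) > 1" by (auto simp: D_def mixing_def)
    moreover have "fE x \<noteq> []" using ep[OF \<open>x \<in> E\<close>] by (simp add: edge_path_def)
    ultimately show "length (fE x) = 1" by (cases "fE x") auto
  qed
  have gE: "\<And>x. x \<in> E \<Longrightarrow> g x \<in> E"
  proof -
    fix x assume "x \<in> E"
    then have "fE x \<noteq> []" "set (fE x) \<subseteq> oedges E" using ep by (auto simp: edge_path_def)
    then have "hd (fE x) \<in> oedges E" by auto
    then show "g x \<in> E" by (auto simp: g_def img_edge_def oedges_def)
  qed
  have DE: "D \<subseteq> E" by (auto simp: D_def)
  have ginj: "\<And>y z. y \<in> D \<Longrightarrow> z \<in> D \<Longrightarrow> g y = g z \<Longrightarrow> y = z"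
  proof (rule ccontr)
    fix y z assume y: "y \<in> D" and z: "z \<in> D" and gyz: "g y = g z" and ne: "y \<noteq> z"
    obtain a where a: "fE y = [a]" using D1[OF y] len1_single by force
    obtain b where b: "fE z = [b]" using D1[OF z] len1_single by force
    have "fst a = fst b" using gyz a b by (simp add: g_def img_edge_def)
    then have "fE y = fE z \<or> fE y = rev_path (fE z)"
      using a b by (cases a; cases b) (auto simp: rev_path_def)
    then have "surplus E fE y" using y z ne by (auto simp: surplus_def D_def)
    then show False using y by (simp add: D_def)
  qed
  have chain: "\<And>y n. (\<forall>k<n. (g ^^ k) y \<in> D) \<Longrightarrow> \<exists>b. fpow fE n y = [((g ^^ n) y, b)]"
    using fpow_chain[of D fE, OF D1] unfolding g_def by blast
  have orbitE: "\<And>y n. y \<in> E \<Longrightarrow> (\<forall>k<n. (g ^^ k) y \<in> D) \<Longrightarrow> (g ^^ n) y \<in> E"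
  proof -
    fix y n assume "y \<in> E" "\<forall>k<n. (g ^^ k) y \<in> D"
    then show "(g ^^ n) y \<in> E"
      by (induction n) (use DE gE in auto)
  qed
  have noinf: "\<And>y. y \<in> E \<Longrightarrow> \<not> (\<forall>k. (g ^^ k) y \<in> D)"
  proof
    fix y assume y: "y \<in> E" and all: "\<forall>k. (g ^^ k) y \<in> D"
    have "\<And>n. length (fpow fE n y) = 1"
    proof -
      fix n obtain b where "fpow fE n y = [((g ^^ n) y, b)]" using chain all by blast
      then show "length (fpow fE n y) = 1" by simp
    qed
    moreover have "filterlim (\<lambda>n. length (fpow fE n y)) at_top sequentially"
      using assms(4) y by (simp add: expanding_def)
    then have "eventually (\<lambda>n. length (fpow fE n y) \<ge> 2) sequentially"
      by (simp add: filterlim_at_top)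
    then obtain n where "length (fpow fE n y) \<ge> 2" by (auto simp: eventually_sequentially)
    ultimately show False by simp
  qed
  have Sgen: "stack_gen E fE = {(e, g e) | e. e \<in> D}"
    by (auto simp: stack_gen_def D_def g_def)
  have symS: "S\<inverse> = S" by (auto simp: S_def)
  have SE: "S \<subseteq> E \<times> E" using Sgen gE DE by (auto simp: S_def)
  obtain x where x: "x \<in> E" and Kx: "K = stack_rel E fE `` {x}"
    using assms(6) by (auto simp: stacks_def quotient_def)
  have rel: "stack_rel E fE = Id_on E \<union> S\<^sup>+" by (simp add: stack_rel_def S_def)
  have relstar: "\<And>y. y \<in> K \<longleftrightarrow> y \<in> E \<and> (x, y) \<in> S\<^sup>*"
  proof -
    fix y
    have "(x,y) \<in> S\<^sup>+ \<Longrightarrow> y \<in> E" using SE by (metis SigmaE2 subsetD trancl_subset_Sigma)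
    then show "y \<in> K \<longleftrightarrow> y \<in> E \<and> (x, y) \<in> S\<^sup>*"
      using x by (auto simp: Kx rel rtrancl_eq_or_trancl)
  qed
  have "\<exists>e\<in>K. \<not> (\<exists>z\<in>D. g z = e)"
  proof (rule ccontr)
    assume "\<not> ?thesis"
    then have pre: "\<And>e. e \<in> K \<Longrightarrow> \<exists>z\<in>D. g z = e" by blast
    have KE: "K \<subseteq> E" using relstar by auto
    have finK: "finite K" using KE fin finite_subset by blast
    have "K \<subseteq> g ` (K \<inter> D)"
    proof
      fix e assume e: "e \<in> K"
      then obtain z where z: "z \<in> D" "g z = e" using pre by blast
      have "(z, e) \<in> S" using z Sgen by (auto simp: S_def)
      then have "(e, z) \<in> S" using symS by blast
      then have "z \<in> K" using e relstar z DE by (meson rtrancl_into_rtrancl subsetD)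
      then show "e \<in> g ` (K \<inter> D)" using z by auto
    qed
    then have "card K \<le> card (g ` (K \<inter> D))" using finK by (simp add: card_mono)
    also have "\<dots> \<le> card (K \<inter> D)" using finK card_image_le by blast
    finally have "card K \<le> card (K \<inter> D)" .
    then have KD: "K \<subseteq> D" using finK
      by (metis Int_lower1 card_seteq finite_Int inf.absorb_iff1)
    have xK: "x \<in> K" using relstar x by auto
    have "\<forall>k. (g ^^ k) x \<in> K"
    proof
      fix k show "(g ^^ k) x \<in> K"
      proof (induction k)
        case 0 then show ?case using xK by simp
      next
        case (Suc k)
        let ?z = "(g ^^ k) x"
        have "?z \<in> D" using Suc KD by auto
        then have "(?z, g ?z) \<in> S" using Sgen by (auto simp: S_def)
        then show ?case using Suc relstar gE DE \<open>?z \<in> D\<close>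
          by (auto intro: rtrancl_into_rtrancl)
      qed
    qed
    then show False using noinf[OF x] KD by auto
  qed
  then obtain e where eK: "e \<in> K" and nopre: "\<not> (\<exists>z\<in>D. g z = e)" by blast
  have eE: "e \<in> E" using eK relstar by auto
  have "\<exists>s. (g ^^ s) e \<notin> D" using noinf[OF eE] by auto
  define s where "s = (LEAST s. (g ^^ s) e \<notin> D)"
  have sD: "(g ^^ s) e \<notin> D" unfolding s_def using \<open>\<exists>s. (g ^^ s) e \<notin> D\<close> by (rule LeastI_ex)
  have belowD: "\<And>k. k < s \<Longrightarrow> (g ^^ k) e \<in> D" unfolding s_def using not_less_Least by blast
  have fp: "\<And>k. k \<le> s \<Longrightarrow> \<exists>b. fpow fE k e = [((g ^^ k) e, b)]"
    using chain belowD by simp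
  have fst_fp: "\<And>k. k \<le> s \<Longrightarrow> fst (hd (fpow fE k e)) = (g ^^ k) e"
    using fp by fastforce
  have len_fp: "\<And>k. k \<le> s \<Longrightarrow> length (fpow fE k e) = 1"
    using fp by fastforce
  have orbE: "\<And>k. k \<le> s \<Longrightarrow> (g ^^ k) e \<in> E" using orbitE eE belowD by simp
  define C where "C = {(g ^^ k) e | k. k \<le> s}"
  have estar: "(e, x) \<in> S\<^sup>*"
  proof -
    have "(x, e) \<in> S\<^sup>*" using eK relstar by auto
    then have "(e, x) \<in> (S\<inverse>)\<^sup>*" by (simp add: rtrancl_converse)
    then show ?thesis using symS by simp
  qed
  have Cclosed: "\<And>y z. y \<in> C \<Longrightarrow> (y, z) \<in> S \<Longrightarrow> z \<in> C"
  proof -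
    fix y z assume yC: "y \<in> C" and yz: "(y, z) \<in> S"
    obtain k where k: "k \<le> s" "y = (g ^^ k) e" using yC by (auto simp: C_def)
    from yz consider "y \<in> D \<and> z = g y" | "z \<in> D \<and> y = g z" using Sgen by (auto simp: S_def)
    then show "z \<in> C"
    proof cases
      case 1
      then have "k < s" using k sD le_neq_implies_less by blast
      then show ?thesis using 1 k by (auto simp: C_def intro!: exI[of _ "Suc k"])
    next
      case 2
      show ?thesis
      proof (cases k)
        case 0 then show ?thesis using 2 k nopre by auto
      next
        case (Suc j)
        have "(g ^^ j) e \<in> D" using belowD k Suc by simp
        moreover have "g ((g ^^ j) e) = y" using k Suc by simp
        ultimately have "z = (g ^^ j) e" using 2 ginj by metis
        then show ?thesis using k Suc by (auto simp: C_def)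
      qed
    qed
  qed
  have Cstar: "\<And>z. (e, z) \<in> S\<^sup>* \<Longrightarrow> z \<in> C"
  proof -
    fix z assume "(e, z) \<in> S\<^sup>*"
    then show "z \<in> C"
    proof (induction rule: rtrancl_induct)
      case base then show ?case by (auto simp: C_def intro!: exI[of _ 0])
    next
      case (step y z) then show ?case using Cclosed by blast
    qed
  qed
  have orbstar: "\<And>k. k \<le> s \<Longrightarrow> (e, (g ^^ k) e) \<in> S\<^sup>*"
  proof -
    fix k assume "k \<le> s"
    then show "(e, (g ^^ k) e) \<in> S\<^sup>*"
    proof (induction k)
      case 0 then show ?case by simp
    next
      case (Suc k)
      then have "(g ^^ k) e \<in> D" using belowD by simp
      then have "((g ^^ k) e, (g ^^ Suc k) e) \<in> S" using Sgen by (auto simp: S_def)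
      then show ?case using Suc by (auto intro: rtrancl_into_rtrancl)
    qed
  qed
  have KC: "K = C"
  proof
    show "K \<subseteq> C"
    proof
      fix y assume "y \<in> K"
      then have "(x, y) \<in> S\<^sup>*" using relstar by auto
      then show "y \<in> C" using Cstar estar by (meson rtrancl_trans)
    qed
  next
    show "C \<subseteq> K"
    proof
      fix y assume "y \<in> C"
      then obtain k where k: "k \<le> s" "y = (g ^^ k) e" by (auto simp: C_def)
      have "(x, e) \<in> S\<^sup>*" using eK relstar by auto
      then have "(x, y) \<in> S\<^sup>*" using orbstar k by (meson rtrancl_trans)
      then show "y \<in> K" using relstar orbE k by auto
    qed
  qed
  have C2: "C = {fst (hd (fpow fE k e)) | k. k \<le> s}"
    using fst_fp unfolding C_def by (metis (no_types, opaque_lifting))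
  have endD: "mixing fE ((g ^^ s) e) \<or> surplus E fE ((g ^^ s) e)"
    using sD orbE[of s] by (auto simp: D_def)
  show ?thesis
    apply (rule bexI[OF _ eE])
    apply (rule exI[of _ s])
    using len_fp KC C2 fst_fp belowD endD by (auto simp: D_def)
qed

end
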